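(* Let $S\subset\mathbb{R}^n$ be a real algebraic variety given as the common zero set of $m$ real polynomials $F_1,\dots,F_m$ in unknowns $x_1,\dots,x_n$, such that every point $(x_1,\dots,x_n)\in S$ satisfies $0<x_i$ for $i=1,\dots,n$ and $\sum_{i=1}^n x_i<1$. Suppose the highest power of $x_i$ occurring in $F_j$ is $x_i^{d_{ij}}$, and set $$D'=\sum_{i=1}^n\max_{1\le j\le m}d_{ij}.$$ Then there is a game with $D'+m$ players, each of whom has $2$ pure strategies, whose set of totally mixed Nash equilibria is stably isomorphic to $S$.
   Context: A real algebraic variety is the set of common real zeros in $\mathbb{R}^n$ of finitely many real polynomials. Two semialgebraic sets are semialgebraically isomorphic if there is a homeomorphism between them whose graph is semialgebraic; they are stably isomorphic if they are equivalent under the equivalence relation generated by semialgebraic isomorphisms and the canonical projections $W\times\mathbb{R}^k\to W$. A finite normal form game consists of players $I=\{1,\dots,N\}$, finite pure strategy sets $S_i=\{s_{i0},\dots,s_{id_i}\}$, and payoffs $u_i:\prod_i S_i\to\mathbb{R}$. A mixed strategy of player $i$ is a probability vector $\sigma_i$ on $S_i$; expected payoffs are multilinear: $u_i(\sigma)=\sum_{s}u_i(s)\prod_k\sigma_k(s_k)$, and $u_i(s_{ij},\sigma_{-i})$ denotes player $i$'s expected payoff when $i$ plays $s_{ij}$ and the others play according to $\sigma$. A profile $\sigma$ is a totally mixed Nash equilibrium if $0<\sigma_i(s_{ij})<1$ for all $i,j$ and $u_i(s_{ij},\sigma_{-i})=u_i(s_{i0},\sigma_{-i})$ for all $i$ and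 $j=1,\dots,d_i$. When every player has two pure strategies, the set of totally mixed Nash equilibria is regarded as a subset of $\mathbb{R}^N$ via the coordinates $p_i=\sigma_i(s_{i1})$. *)

theory Defs
  imports Complex_Main "HOL-Library.FuncSet"
begin

text \<open>A real polynomial is represented by its coefficient function on exponent
vectors (monomial x_0^(a 0) * x_1^(a 1) * ... has coefficient c a).
Points of R^n are real lists of length n; variable x_(i+1) of the paper is list index i.\<close>

type_synonym mpoly = "(nat \<Rightarrow> nat) \<Rightarrow> real"

definition is_poly :: "nat \<Rightarrow> mpoly \<Rightarrow> bool" where
  "is_poly n c \<longleftrightarrow> finite {a. c a \<noteq> 0} \<and> (\<forall>a. c a \<noteq> 0 \<longrightarrow> (\<forall>i\<ge>n. a i = 0))"

definition peval :: "mpoly \<Rightarrow> real list \<Rightarrow> real" where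
  "peval c x = (\<Sum>a\<in>{a. c a \<noteq> 0}. c a * (\<Prod>i<length x. (x ! i) ^ (a i)))"

definition deg_in :: "mpoly \<Rightarrow> nat \<Rightarrow> nat" where
  "deg_in c i = Max (insert 0 {a i | a. c a \<noteq> 0})"

definition zero_set :: "nat \<Rightarrow> nat \<Rightarrow> (nat \<Rightarrow> mpoly) \<Rightarrow> real list set" where
  "zero_set n m F = {x. length x = n \<and> (\<forall>j<m. peval (F j) x = 0)}"

inductive_set semialg :: "nat \<Rightarrow> real list set set" for n :: nat where
  sa_eq: "is_poly n p \<Longrightarrow> {x. length x = n \<and> peval p x = 0} \<in> semialg n"
| sa_gt: "is_poly n p \<Longrightarrow> {x. length x = n \<and> peval p x > 0} \<in> semialg n"
| sa_un: "A \<in> semialg n \<Longrightarrow> B \<in> semialg n \<Longrightarrow> A \<union> B \<in> semialg n"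
| sa_compl: "A \<in> semialg n \<Longrightarrow> {x. length x = n} - A \<in> semialg n"

definition ldist :: "real list \<Rightarrow> real list \<Rightarrow> real" where
  "ldist x y = sqrt (\<Sum>i<length x. (x ! i - y ! i)\<^sup>2)"

definition lcont_on :: "real list set \<Rightarrow> (real list \<Rightarrow> real list) \<Rightarrow> bool" where
  "lcont_on A f \<longleftrightarrow> (\<forall>x\<in>A. \<forall>e>0. \<exists>d>0. \<forall>y\<in>A. ldist x y < d \<longrightarrow> ldist (f x) (f y) < e)"

definition semialg_iso :: "nat \<Rightarrow> real list set \<Rightarrow> nat \<Rightarrow> real list set \<Rightarrow> bool" where
  "semialg_iso n A m B \<longleftrightarrow>
     A \<subseteq> {x. length x = n} \<and> B \<subseteq> {y. length y = m} \<and>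
     (\<exists>f. bij_betw f A B \<and> lcont_on A f \<and> lcont_on B (inv_into A f) \<and>
          {x @ f x | x. x \<in> A} \<in> semialg (n + m))"

inductive stably_iso :: "nat \<times> real list set \<Rightarrow> nat \<times> real list set \<Rightarrow> bool" where
  si_iso: "semialg_iso n A m B \<Longrightarrow> stably_iso (n, A) (m, B)"
| si_proj: "A \<in> semialg n \<Longrightarrow>
     stably_iso (n + k, {x @ y | x y. x \<in> A \<and> length y = k}) (n, A)"
| si_sym: "stably_iso P Q \<Longrightarrow> stably_iso Q P"
| si_trans: "stably_iso P Q \<Longrightarrow> stably_iso Q R \<Longrightarrow> stably_iso P R"

text \<open>Players are 0..N-1; a pure profile is s \<in> PiE {0..<N} (%_. {0,1});
payoff u i s of player i. A mixed profile is p (list of length N), p!k = prob. that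
player k plays strategy 1.\<close>

definition pure_profiles :: "nat \<Rightarrow> (nat \<Rightarrow> nat) set" where
  "pure_profiles N = PiE {..<N} (\<lambda>_. {0, 1})"

definition exp_payoff ::
  "nat \<Rightarrow> (nat \<Rightarrow> (nat \<Rightarrow> nat) \<Rightarrow> real) \<Rightarrow> nat \<Rightarrow> nat \<Rightarrow> real list \<Rightarrow> real" where
  "exp_payoff N u i j p =
     (\<Sum>s\<in>{s\<in>pure_profiles N. s i = j}.
        u i s * (\<Prod>k\<in>{..<N} - {i}. (if s k = 1 then p ! k else 1 - p ! k)))"

definition tmne :: "nat \<Rightarrow> (nat \<Rightarrow> (nat \<Rightarrow> nat) \<Rightarrow> real) \<Rightarrow> real list set" where
  "tmne N u = {p. length p = N \<and> (\<forall>i<N. 0 < p ! i \<and> p ! i < 1) \<and>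
                  (\<forall>i<N. exp_payoff N u i 1 p = exp_payoff N u i 0 p)}"

end

theory Submission
  imports Defs "HOL-Analysis.L2_Norm"
begin

definition mon :: "(nat \<Rightarrow> nat) \<Rightarrow> real list \<Rightarrow> real" where
  "mon a x = (\<Prod>i<length x. (x ! i) ^ (a i))"

lemma peval_mon: "peval c x = (\<Sum>a\<in>{a. c a \<noteq> 0}. c a * mon a x)"
  by (simp add: peval_def mon_def)

lemma peval_superset:
  assumes "finite A" "{a. c a \<noteq> 0} \<subseteq> A"
  shows "peval c x = (\<Sum>a\<in>A. c a * mon a x)"
  unfolding peval_mon
  by (rule sum.mono_neutral_left) (use assms in auto)

definition pfun :: "nat \<Rightarrow> (real list \<Rightarrow> real) \<Rightarrow> bool" where
  "pfun n f \<longleftrightarrow> (\<exists>c. is_poly n c \<and> (\<forall>x. length x = n \<longrightarrow> peval c x = f x))"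

lemma pfun_const: "pfun n (\<lambda>x. r)"
proof -
  define c :: mpoly where "c a = (if a = (\<lambda>_. 0) then r else 0)" for a
  have s: "{a. c a \<noteq> 0} \<subseteq> {\<lambda>_. 0}" by (auto simp: c_def split: if_splits)
  have "is_poly n c" unfolding is_poly_def using s finite_subset by (auto simp: c_def split: if_splits)
  moreover have "peval c x = r" for x
    by (subst peval_superset[OF _ s]) (auto simp: c_def mon_def)
  ultimately show ?thesis unfolding pfun_def by blast
qed

lemma pfun_var: assumes "i < n" shows "pfun n (\<lambda>x. x ! i)"
proof -
  define e where "e = (\<lambda>j. if j = i then 1 else (0::nat))"
  define c :: mpoly where "c a = (if a = e then 1 else 0)" for a
  have s: "{a. c a \<noteq> 0} \<subseteq> {e}" by (auto simp: c_def split: if_splits)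
  have "is_poly n c" unfolding is_poly_def using s finite_subset assms by (auto simp: c_def e_def split: if_splits)
  moreover have "peval c x = x ! i" if "length x = n" for x
  proof -
    have "peval c x = mon e x" by (subst peval_superset[OF _ s]) (auto simp: c_def)
    also have "\<dots> = (\<Prod>j<length x. if j = i then x ! j else 1)"
      unfolding mon_def e_def by (rule prod.cong) auto
    also have "\<dots> = x ! i" using that assms by (simp add: prod.delta)
    finally show ?thesis .
  qed
  ultimately show ?thesis unfolding pfun_def by blast
qed

lemma pfun_add: assumes "pfun n f" "pfun n g" shows "pfun n (\<lambda>x. f x + g x)"
proof -
  obtain c where c: "is_poly n c" "\<forall>x. length x = n \<longrightarrow> peval c x = f x" using assms(1) pfun_def by auto
  obtain d where d: "is_poly n d" "\<forall>x. length x = n \<longrightarrow> peval d x = g x" using assms(2) pfun_def by auto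
  define A where "A = {a. c a \<noteq> 0} \<union> {a. d a \<noteq> 0}"
  have fA: "finite A" using c(1) d(1) by (auto simp: A_def is_poly_def)
  have "is_poly n (\<lambda>a. c a + d a)" unfolding is_poly_def
  proof
    show "finite {a. c a + d a \<noteq> 0}" by (rule finite_subset[OF _ fA]) (auto simp: A_def)
    show "\<forall>a. c a + d a \<noteq> 0 \<longrightarrow> (\<forall>i\<ge>n. a i = 0)"
      using c(1) d(1) unfolding is_poly_def by (metis add.right_neutral add_0)
  qed
  moreover have "peval (\<lambda>a. c a + d a) x = f x + g x" if "length x = n" for x
  proof -
    have "peval (\<lambda>a. c a + d a) x = (\<Sum>a\<in>A. (c a + d a) * mon a x)"
      by (rule peval_superset[OF fA]) (auto simp: A_def)
    also have "\<dots> = (\<Sum>a\<in>A. c a * mon a x) + (\<Sum>a\<in>A. d a * mon a x)"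
      by (simp add: distrib_right sum.distrib)
    also have "\<dots> = peval c x + peval d x"
      by (subst (1 2) peval_superset[OF fA]) (auto simp: A_def)
    finally show ?thesis using c d that by simp
  qed
  ultimately show ?thesis unfolding pfun_def by blast
qed

lemma mon_add: "mon (\<lambda>i. a i + b i) x = mon a x * mon b x"
  by (simp add: mon_def power_add prod.distrib)

lemma pfun_mult: assumes "pfun n f" "pfun n g" shows "pfun n (\<lambda>x. f x * g x)"
proof -
  obtain c where c: "is_poly n c" "\<forall>x. length x = n \<longrightarrow> peval c x = f x" using assms(1) pfun_def by auto
  obtain d where d: "is_poly n d" "\<forall>x. length x = n \<longrightarrow> peval d x = g x" using assms(2) pfun_def by auto
  define Sc where "Sc = {a. c a \<noteq> 0}"
  define Sd where "Sd = {a. d a \<noteq> 0}"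
  have fin: "finite Sc" "finite Sd" using c(1) d(1) by (auto simp: Sc_def Sd_def is_poly_def)
  define P where "P = Sc \<times> Sd"
  have fP: "finite P" using fin by (simp add: P_def)
  define pl where "pl = (\<lambda>(b::nat\<Rightarrow>nat, e::nat\<Rightarrow>nat). (\<lambda>i. b i + e i))"
  define h :: mpoly where "h a = (\<Sum>q\<in>{q\<in>P. pl q = a}. c (fst q) * d (snd q))" for a
  have sub: "{a. h a \<noteq> 0} \<subseteq> pl ` P"
  proof
    fix a assume "a \<in> {a. h a \<noteq> 0}"
    then have "h a \<noteq> 0" by simp
    have "{q\<in>P. pl q = a} \<noteq> {}"
    proof
      assume "{q\<in>P. pl q = a} = {}"
      then have "h a = 0" unfolding h_def by (simp only: sum.empty)
      then show False using \<open>h a \<noteq> 0\<close> by simp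
    qed
    then show "a \<in> pl ` P" by blast
  qed
  have "is_poly n h" unfolding is_poly_def
  proof
    show "finite {a. h a \<noteq> 0}" using sub fP finite_subset by blast
    show "\<forall>a. h a \<noteq> 0 \<longrightarrow> (\<forall>i\<ge>n. a i = 0)"
    proof (intro allI impI)
      fix a i assume "h a \<noteq> 0" "n \<le> i"
      then have "a \<in> pl ` P" using sub by blast
      then obtain q where "q \<in> P" "a = pl q" by blast
      then show "a i = 0" using c(1) d(1) \<open>n \<le> i\<close> by (cases q) (auto simp: is_poly_def P_def Sc_def Sd_def pl_def)
    qed
  qed
  moreover have "peval h x = f x * g x" if "length x = n" for x
  proof -
    have "peval h x = (\<Sum>a\<in>pl ` P. h a * mon a x)" by (rule peval_superset[OF _ sub]) (use fP in auto)
    also have "\<dots> = (\<Sum>a\<in>pl ` P. \<Sum>q\<in>{q\<in>P. pl q = a}. c (fst q) * d (snd q) * mon (pl q) x)"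
      by (simp add: h_def sum_distrib_right)
    also have "\<dots> = (\<Sum>q\<in>P. c (fst q) * d (snd q) * mon (pl q) x)"
      by (rule sum.image_gen[symmetric]) (rule fP)
    also have "\<dots> = (\<Sum>q\<in>P. (c (fst q) * mon (fst q) x) * (d (snd q) * mon (snd q) x))"
      by (rule sum.cong) (auto simp: pl_def mon_add)
    also have "\<dots> = (\<Sum>b\<in>Sc. c b * mon b x) * (\<Sum>e\<in>Sd. d e * mon e x)"
      by (simp add: P_def sum_product sum.cartesian_product case_prod_beta)
    also have "\<dots> = peval c x * peval d x" by (simp add: peval_mon Sc_def Sd_def)
    finally show ?thesis using c d that by simp
  qed
  ultimately show ?thesis unfolding pfun_def by blast
qed

lemma pfun_sum: assumes "finite A" "\<And>a. a \<in> A \<Longrightarrow> pfun n (f a)" shows "pfun n (\<lambda>x. \<Sum>a\<in>A. f a x)"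
  using assms by (induction A rule: finite_induct) (auto intro: pfun_add pfun_const)

lemma pfun_prod: assumes "finite A" "\<And>a. a \<in> A \<Longrightarrow> pfun n (f a)" shows "pfun n (\<lambda>x. \<Prod>a\<in>A. f a x)"
  using assms by (induction A rule: finite_induct) (auto intro: pfun_mult pfun_const)

lemma pfun_power: assumes "pfun n f" shows "pfun n (\<lambda>x. f x ^ k)"
  using assms by (induction k) (auto intro: pfun_mult pfun_const)

lemma pfun_diff: assumes "pfun n f" "pfun n g" shows "pfun n (\<lambda>x. f x - g x)"
proof -
  have "pfun n (\<lambda>x. f x + (-1) * g x)" by (intro pfun_add pfun_mult pfun_const assms)
  then show ?thesis by simp
qed

lemma pfun_cong: assumes "pfun n f" "\<And>x. length x = n \<Longrightarrow> f x = g x" shows "pfun n g"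
  using assms unfolding pfun_def by auto

lemma pfun_peval_shift:
  assumes "is_poly k c" "N + k \<le> n"
  shows "pfun n (\<lambda>z. peval c (take k (drop N z)))"
proof -
  have fin: "finite {a. c a \<noteq> 0}" using assms(1) by (simp add: is_poly_def)
  have "pfun n (\<lambda>z. \<Sum>a\<in>{a. c a \<noteq> 0}. c a * (\<Prod>i<k. (z ! (N + i)) ^ (a i)))"
    using assms(2) by (intro pfun_sum fin pfun_mult pfun_const pfun_prod pfun_power pfun_var) auto
  then show ?thesis
  proof (rule pfun_cong)
    fix z :: "real list" assume z: "length z = n"
    have l: "length (take k (drop N z)) = k" using z assms(2) by simp
    show "(\<Sum>a\<in>{a. c a \<noteq> 0}. c a * (\<Prod>i<k. (z ! (N + i)) ^ (a i))) = peval c (take k (drop N z))"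
      unfolding peval_def l
      by (intro sum.cong refl arg_cong2[where f="(*)"] prod.cong) (use z assms(2) in auto)
  qed
qed

lemma semialg_sub: "A \<in> semialg n \<Longrightarrow> A \<subseteq> {x. length x = n}"
  by (induction rule: semialg.induct) auto

lemma semialg_eq: "pfun n f \<Longrightarrow> {x. length x = n \<and> f x = 0} \<in> semialg n"
proof -
  assume "pfun n f"
  then obtain c where c: "is_poly n c" "\<forall>x. length x = n \<longrightarrow> peval c x = f x" by (auto simp: pfun_def)
  have "{x. length x = n \<and> f x = 0} = {x. length x = n \<and> peval c x = 0}" using c by auto
  then show ?thesis using sa_eq[OF c(1)] by simp
qed

lemma semialg_gt: "pfun n f \<Longrightarrow> {x. length x = n \<and> f x > 0} \<in> semialg n"
proof -
  assume "pfun n f"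
  then obtain c where c: "is_poly n c" "\<forall>x. length x = n \<longrightarrow> peval c x = f x" by (auto simp: pfun_def)
  have "{x. length x = n \<and> f x > 0} = {x. length x = n \<and> peval c x > 0}" using c by auto
  then show ?thesis using sa_gt[OF c(1)] by simp
qed

lemma semialg_empty: "{} \<in> semialg n"
  using semialg_gt[OF pfun_const[of n 0]] by simp

lemma semialg_univ: "{x. length x = n} \<in> semialg n"
  using sa_compl[OF semialg_empty[of n]] by simp

lemma semialg_Int: assumes "A \<in> semialg n" "B \<in> semialg n" shows "A \<inter> B \<in> semialg n"
proof -
  let ?U = "{x::real list. length x = n}"
  have "A \<inter> B = ?U - ((?U - A) \<union> (?U - B))" using semialg_sub[OF assms(1)] semialg_sub[OF assms(2)] by auto
  then show ?thesis using assms by (auto intro!: sa_compl sa_un)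
qed

lemma semialg_conj:
  assumes "{x. length x = n \<and> P x} \<in> semialg n" "{x. length x = n \<and> Q x} \<in> semialg n"
  shows "{x. length x = n \<and> P x \<and> Q x} \<in> semialg n"
proof -
  have e: "{x. length x = n \<and> P x \<and> Q x} = {x. length x = n \<and> P x} \<inter> {x. length x = n \<and> Q x}" by auto
  show ?thesis unfolding e by (rule semialg_Int[OF assms])
qed

lemma semialg_all:
  "(\<forall>k<(K::nat). {x. length x = n \<and> P k x} \<in> semialg n) \<Longrightarrow> {x. length x = n \<and> (\<forall>k<K. P k x)} \<in> semialg n"
proof (induction K)
  case 0 then show ?case using semialg_univ by simp
next
  case (Suc K)
  have "{x. length x = n \<and> (\<forall>k<Suc K. P k x)} = {x. length x = n \<and> (\<forall>k<K. P k x) \<and> P K x}"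
    by (auto simp: less_Suc_eq)
  moreover have "{x. length x = n \<and> (\<forall>k<K. P k x)} \<in> semialg n" using Suc.IH Suc.prems by simp
  moreover have "{x. length x = n \<and> P K x} \<in> semialg n" using Suc.prems by simp
  ultimately show ?case using semialg_conj[of n "\<lambda>x. \<forall>k<K. P k x" "P K"] by simp
qed

lemma semialg_ge: "pfun n f \<Longrightarrow> {x. length x = n \<and> f x \<ge> 0} \<in> semialg n"
proof -
  assume a: "pfun n f"
  have e: "{x. length x = n \<and> f x \<ge> 0} = {x. length x = n} - {x. length x = n \<and> - f x > 0}" by auto
  have "pfun n (\<lambda>x. - f x)" using pfun_diff[OF pfun_const[of n 0] a] by simp
  then show ?thesis unfolding e by (intro sa_compl semialg_gt)
qed


lemma ldist_L2: "ldist x y = L2_set (\<lambda>i. x ! i - y ! i) {..<length x}"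
  by (simp add: ldist_def L2_set_def)

lemma ldist_nth: assumes "i < length x" shows "\<bar>x ! i - y ! i\<bar> \<le> ldist x y"
proof -
  have "(x ! i - y ! i)\<^sup>2 \<le> (\<Sum>j<length x. (x ! j - y ! j)\<^sup>2)"
    by (rule member_le_sum) (use assms in auto)
  then have "sqrt ((x ! i - y ! i)\<^sup>2) \<le> ldist x y" unfolding ldist_def by (rule real_sqrt_le_mono)
  then show ?thesis by simp
qed

lemma ldist_le_sum: "ldist x y \<le> (\<Sum>i<length x. \<bar>x ! i - y ! i\<bar>)"
  unfolding ldist_L2 by (rule L2_set_le_sum_abs)

definition ccomp :: "real list set \<Rightarrow> (real list \<Rightarrow> real) \<Rightarrow> bool" where
  "ccomp A h \<longleftrightarrow> (\<forall>x\<in>A. \<forall>e>0. \<exists>d>0. \<forall>y\<in>A. ldist x y < d \<longrightarrow> \<bar>h x - h y\<bar> < e)"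

lemma lcont_compI:
  assumes len: "\<And>x. x \<in> A \<Longrightarrow> length (f x) = b"
    and comp: "\<And>k. k < b \<Longrightarrow> ccomp A (\<lambda>x. f x ! k)"
  shows "lcont_on A f"
  unfolding lcont_on_def
proof (intro ballI allI impI)
  fix x e assume x: "x \<in> A" and e: "(e::real) > 0"
  show "\<exists>d>0. \<forall>y\<in>A. ldist x y < d \<longrightarrow> ldist (f x) (f y) < e"
  proof (cases "b = 0")
    case True
    then show ?thesis using len x e by (intro exI[of _ 1]) (auto simp: ldist_def)
  next
    case False
    define e' where "e' = e / real b"
    have e': "e' > 0" using e False by (simp add: e'_def)
    have "\<forall>k<b. \<exists>d>0. \<forall>y\<in>A. ldist x y < d \<longrightarrow> \<bar>f x ! k - f y ! k\<bar> < e'"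
      using comp x e' unfolding ccomp_def by blast
    then obtain D where D: "\<And>k. k < b \<Longrightarrow> D k > 0 \<and> (\<forall>y\<in>A. ldist x y < D k \<longrightarrow> \<bar>f x ! k - f y ! k\<bar> < e')"
      by metis
    define d where "d = Min (D ` {..<b})"
    have d: "d > 0" unfolding d_def using D False by (subst Min_gr_iff) auto
    have dle: "d \<le> D k" if "k < b" for k unfolding d_def using that by (intro Min_le) auto
    show ?thesis
    proof (intro exI conjI ballI impI)
      show "d > 0" by (rule d)
      fix y assume y: "y \<in> A" "ldist x y < d"
      have "ldist (f x) (f y) \<le> (\<Sum>k<b. \<bar>f x ! k - f y ! k\<bar>)" using ldist_le_sum len x by metis
      also have "\<dots> < (\<Sum>k<b. e')"
      proof (rule sum_strict_mono)
        fix k assume "k \<in> {..<b}"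
        then have k: "k < b" by simp
        have "ldist x y < D k" using y(2) dle[OF k] by linarith
        then show "\<bar>f x ! k - f y ! k\<bar> < e'" using D[OF k] y(1) by blast
      qed (use False in auto)
      also have "\<dots> = e" using False by (simp add: e'_def)
      finally show "ldist (f x) (f y) < e" .
    qed
  qed
qed

lemma ccomp_nth:
  assumes "\<And>x. x \<in> A \<Longrightarrow> i < length x"
  shows "ccomp A (\<lambda>x. x ! i)"
  unfolding ccomp_def
proof (intro ballI allI impI)
  fix x e assume "x \<in> A" "(e::real) > 0"
  then show "\<exists>d>0. \<forall>y\<in>A. ldist x y < d \<longrightarrow> \<bar>x ! i - y ! i\<bar> < e"
  proof (intro exI[of _ e] conjI ballI impI)
    fix y assume "y \<in> A" "ldist x y < e"
    moreover have "\<bar>x ! i - y ! i\<bar> \<le> ldist x y" using ldist_nth assms \<open>x \<in> A\<close> by blast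
    ultimately show "\<bar>x ! i - y ! i\<bar> < e" by linarith
  qed (use \<open>e > 0\<close> in simp)
qed

lemma ccomp_isCont:
  assumes "ccomp A h" "\<And>x. x \<in> A \<Longrightarrow> isCont \<phi> (h x)"
  shows "ccomp A (\<lambda>x. \<phi> (h x))"
  unfolding ccomp_def
proof (intro ballI allI impI)
  fix x e assume x: "x \<in> A" and e: "(e::real) > 0"
  have "\<phi> \<midarrow>(h x)\<rightarrow> \<phi> (h x)" using assms(2)[OF x] by (simp add: isCont_def)
  then obtain s where s: "s > 0" "\<And>t. t \<noteq> h x \<and> norm (t - h x) < s \<Longrightarrow> norm (\<phi> t - \<phi> (h x)) < e"
    using e unfolding LIM_eq by blast
  obtain d where d: "d > 0" "\<forall>y\<in>A. ldist x y < d \<longrightarrow> \<bar>h x - h y\<bar> < s"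
    using assms(1) x s(1) unfolding ccomp_def by blast
  show "\<exists>d>0. \<forall>y\<in>A. ldist x y < d \<longrightarrow> \<bar>\<phi> (h x) - \<phi> (h y)\<bar> < e"
  proof (intro exI conjI ballI impI)
    fix y assume "y \<in> A" "ldist x y < d"
    then have "\<bar>h x - h y\<bar> < s" using d by blast
    then show "\<bar>\<phi> (h x) - \<phi> (h y)\<bar> < e"
      using s(2)[of "h y"] e by (cases "h y = h x") (auto simp: abs_minus_commute)
  qed (rule d(1))
qed

definition gg :: "real \<Rightarrow> real" where "gg t = (2 * t - 1) / (t * (1 - t))"
definition gi :: "real \<Rightarrow> real" where "gi y = 2 / (2 - y + sqrt (y\<^sup>2 + 4))"

lemma sqrt_gt: "sqrt (y\<^sup>2 + 4) > \<bar>y\<bar>"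
proof -
  have "sqrt (y\<^sup>2) < sqrt (y\<^sup>2 + 4)" by (rule real_sqrt_less_mono) simp
  then show ?thesis by simp
qed

lemma gi_den: "2 - y + sqrt (y\<^sup>2 + 4) > 2"
  using sqrt_gt[of y] by linarith

lemma gi_range: "0 < gi y" "gi y < 1"
  using gi_den[of y] by (auto simp: gi_def)

lemma gg_gi: "gg (gi y) = y"
proof -
  define s where "s = sqrt (y\<^sup>2 + 4)"
  have s2: "s\<^sup>2 = y\<^sup>2 + 4" unfolding s_def by simp
  define D where "D = 2 - y + s"
  have D: "D > 2" using gi_den[of y] by (simp add: D_def s_def)
  have sy: "s - y > 0" using sqrt_gt[of y] by (simp add: s_def)
  have gi: "gi y = 2 / D" by (simp add: gi_def D_def s_def)
  have "gg (2 / D) = (2 * (2 / D) - 1) / ((2 / D) * (1 - 2 / D))" by (simp add: gg_def)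
  also have "\<dots> = (4 - D) * D / (2 * (D - 2))"
    using D by (simp add: field_simps)
  also have "\<dots> = y"
  proof -
    have "(4 - D) * D = y * (2 * (D - 2))"
      unfolding D_def using s2 by (simp add: algebra_simps power2_eq_square)
    then show ?thesis using D by (simp add: field_simps)
  qed
  finally show ?thesis using gi by simp
qed

lemma gi_gg: assumes "0 < t" "t < 1" shows "gi (gg t) = t"
proof -
  define y where "y = gg t"
  have tt: "t * (1 - t) > 0" using assms by simp
  have s: "sqrt (y\<^sup>2 + 4) = (2 * t\<^sup>2 - 2 * t + 1) / (t * (1 - t))"
  proof -
    have pos: "(2 * t\<^sup>2 - 2 * t + 1) / (t * (1 - t)) \<ge> 0"
    proof -
      have "2 * t\<^sup>2 - 2 * t + 1 = t\<^sup>2 + (1 - t)\<^sup>2" by (simp add: power2_eq_square algebra_simps)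
      moreover have "t\<^sup>2 + (1 - t)\<^sup>2 \<ge> 0" by simp
      ultimately have "2 * t\<^sup>2 - 2 * t + 1 \<ge> 0" by linarith
      then show ?thesis using tt by simp
    qed
    define q where "q = t * (1 - t)"
    have q: "q > 0" using tt q_def by simp
    have num: "(2*t-1)\<^sup>2 + 4*q\<^sup>2 = (2 * t\<^sup>2 - 2 * t + 1)\<^sup>2"
      unfolding q_def by (simp add: power2_eq_square algebra_simps)
    have "y\<^sup>2 + 4 = ((2*t-1)\<^sup>2 + 4*q\<^sup>2) / q\<^sup>2"
      unfolding y_def gg_def q_def[symmetric] using q by (simp add: power_divide field_simps)
    also have "\<dots> = ((2 * t\<^sup>2 - 2 * t + 1) / (t * (1 - t)))\<^sup>2"
      using num unfolding q_def by (simp add: power_divide)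
    finally have "y\<^sup>2 + 4 = ((2 * t\<^sup>2 - 2 * t + 1) / (t * (1 - t)))\<^sup>2" .
    then show ?thesis using pos real_sqrt_abs abs_of_nonneg by metis
  qed
  have "2 - y + sqrt (y\<^sup>2 + 4) = 2 - (2 * t - 1) / (t * (1 - t)) + (2 * t\<^sup>2 - 2 * t + 1) / (t * (1 - t))"
    unfolding s by (simp add: y_def gg_def)
  also have "\<dots> = (2 * (t * (1 - t)) - (2 * t - 1) + (2 * t\<^sup>2 - 2 * t + 1)) / (t * (1 - t))"
  proof -
    have "\<And>a b q::real. q \<noteq> 0 \<Longrightarrow> 2 - a/q + b/q = (2*q - a + b)/q" by (simp add: field_simps)
    then show ?thesis using tt by (metis less_irrefl)
  qed
  also have "2 * (t * (1 - t)) - (2 * t - 1) + (2 * t\<^sup>2 - 2 * t + 1) = 2 * (1 - t)"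
    by (simp add: algebra_simps power2_eq_square)
  also have "2 * (1 - t) / (t * (1 - t)) = 2 / t"
  proof -
    have "1 - t \<noteq> 0" using assms by simp
    then show ?thesis by (metis mult.commute mult_divide_mult_cancel_left_if)
  qed
  finally have "2 - y + sqrt (y\<^sup>2 + 4) = 2 / t" .
  then show ?thesis using assms by (simp add: gi_def y_def)
qed

lemma gg_rel: assumes "0 < t" "t < 1" shows "y = gg t \<longleftrightarrow> y * (t * (1 - t)) = 2 * t - 1"
proof -
  have "t * (1 - t) \<noteq> 0" using assms by simp
  then show ?thesis unfolding gg_def by (auto simp: field_simps)
qed

lemma isCont_gg: assumes "0 < t" "t < 1" shows "isCont gg t"
proof -
  have "t * (1 - t) \<noteq> 0" using assms by simp
  then show ?thesis unfolding gg_def[abs_def] by (intro continuous_intros) auto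
qed

lemma isCont_gi: "isCont gi y"
proof -
  have "2 - y + sqrt (y\<^sup>2 + 4) \<noteq> 0" using gi_den[of y] by simp
  then show ?thesis unfolding gi_def[abs_def] by (intro continuous_intros) auto
qed


definition Dset :: "nat \<Rightarrow> nat \<Rightarrow> (nat \<Rightarrow> nat) \<Rightarrow> real list set \<Rightarrow> real list set" where
  "Dset N M var S = {p. length p = N \<and> (\<exists>x\<in>S. \<forall>k<M. p ! k = x ! (var k)) \<and>
      (\<forall>k. M \<le> k \<and> k < N \<longrightarrow> 0 < p ! k \<and> p ! k < 1)}"

lemma zero_set_semialg:
  assumes polys: "\<forall>j<m. is_poly n (F j)"
  shows "zero_set n m F \<in> semialg n"
  unfolding zero_set_def by (rule semialg_all) (use polys sa_eq in auto)

lemma part1: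
  fixes F :: "nat \<Rightarrow> mpoly"
  assumes polys: "\<forall>j<m. is_poly n (F j)"
    and MN: "M \<le> N" and var: "\<forall>k<M. var k < n" and rep: "\<forall>i<n. rep i < M \<and> var (rep i) = i"
  shows "stably_iso (N, Dset N M var (zero_set n m F)) (n, zero_set n m F)"
proof -
  define S where "S = zero_set n m F"
  define r where "r = N - M"
  define D where "D = Dset N M var S"
  define B where "B = {x @ y | x y. x \<in> S \<and> length y = r}"
  define f where "f p = map (\<lambda>i. p ! (rep i)) [0..<n] @ map (\<lambda>j. gg (p ! (M + j))) [0..<r]" for p :: "real list"
  define h where "h z = map (\<lambda>k. z ! (var k)) [0..<M] @ map (\<lambda>j. gi (z ! (n + j))) [0..<r]" for z :: "real list"
  have lenS: "length x = n" if "x \<in> S" for x using that by (simp add: S_def zero_set_def)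
  have lenD: "length p = N" if "p \<in> D" for p using that by (simp add: D_def Dset_def)
  have lenB: "length z = n + r" if "z \<in> B" for z using that lenS by (auto simp: B_def)
  have Nr: "N = M + r" using MN by (simp add: r_def)
  have lenf: "length (f p) = n + r" for p by (simp add: f_def)
  have lenh: "length (h z) = N" for z by (simp add: h_def Nr)
  have Dx: "\<exists>x\<in>S. (\<forall>k<M. p ! k = x ! (var k)) \<and> take n (f p) = x" if "p \<in> D" for p
  proof -
    have "\<exists>x\<in>S. \<forall>k<M. p ! k = x ! (var k)" using that unfolding D_def Dset_def by blast
    then obtain x where x: "x \<in> S" "\<forall>k<M. p ! k = x ! (var k)" by blast
    have "take n (f p) = x"
      by (rule nth_equalityI) (use x lenS rep in \<open>auto simp: f_def nth_append\<close>)
    then show ?thesis using x by blast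
  qed
  have free: "0 < p ! (M + j) \<and> p ! (M + j) < 1" if "p \<in> D" "j < r" for p j
    using that by (auto simp: D_def Dset_def r_def)
  have fD: "f p \<in> B" if pD: "p \<in> D" for p
  proof -
    obtain x where x: "x \<in> S" "take n (f p) = x" using Dx[OF pD] by blast
    have "f p = x @ drop n (f p)" using x(2) append_take_drop_id by metis
    moreover have "length (drop n (f p)) = r" by (simp add: lenf)
    ultimately show ?thesis using x(1) unfolding B_def by blast
  qed
  have hB: "h z \<in> D" if zB: "z \<in> B" for z
  proof -
    obtain x y where z: "z = x @ y" "x \<in> S" "length y = r" using zB by (auto simp: B_def)
    have lx: "length x = n" using lenS z(2) by simp
    have "\<forall>k<M. h z ! k = x ! (var k)" using var lx by (auto simp: h_def nth_append z(1))
    moreover have "0 < h z ! k \<and> h z ! k < 1" if "M \<le> k" "k < N" for k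
      using that gi_range by (auto simp: h_def nth_append Nr)
    ultimately show ?thesis using z(2) lenh by (auto simp: D_def Dset_def)
  qed
  have hf: "h (f p) = p" if pD: "p \<in> D" for p
  proof -
    obtain x where x: "x \<in> S" "\<forall>k<M. p ! k = x ! (var k)" "take n (f p) = x" using Dx[OF pD] by blast
    have lx: "length x = n" using lenS x(1) by simp
    show ?thesis
    proof (rule nth_equalityI)
      show "length (h (f p)) = length p" using lenh lenD[OF pD] by simp
      fix k assume "k < length (h (f p))"
      then have k: "k < N" using lenh by simp
      show "h (f p) ! k = p ! k"
      proof (cases "k < M")
        case True
        have "f p ! var k = x ! var k" using x(3) var True
          by (metis lx nth_take)
        then show ?thesis using True x(2) by (simp add: h_def nth_append)
      next
        case False
        then have "k - M < r" using k Nr by simp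
        then show ?thesis using False free[OF pD, of "k - M"]
          by (simp add: h_def nth_append f_def gi_gg)
      qed
    qed
  qed
  have fh: "f (h z) = z" if zB: "z \<in> B" for z
  proof -
    obtain x y where z: "z = x @ y" "x \<in> S" "length y = r" using zB by (auto simp: B_def)
    have lx: "length x = n" using lenS z(2) by simp
    show ?thesis
    proof (rule nth_equalityI)
      show "length (f (h z)) = length z" using lenf lenB[OF zB] by simp
      fix k assume "k < length (f (h z))"
      then have k: "k < n + r" using lenf by simp
      show "f (h z) ! k = z ! k"
      proof (cases "k < n")
        case True
        then show ?thesis using rep lx by (simp add: f_def h_def nth_append z(1))
      next
        case False
        then have kr: "k - n < r" using k by simp
        then show ?thesis using False k lx by (simp add: f_def h_def nth_append z(1) gg_gi)
      qed
    qed
  qed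
  have bij: "bij_betw f D B"
    by (rule bij_betw_byWitness[where f'=h]) (use hf fh fD hB in auto)
  have inj: "inj_on f D" using bij bij_betw_def by blast
  have invh: "inv_into D f z = h z" if "z \<in> B" for z
    using inv_into_f_eq[OF inj hB[OF that] fh[OF that]] .
  have contf: "lcont_on D f"
  proof (rule lcont_compI[where b="n + r"])
    show "length (f p) = n + r" for p by (rule lenf)
    fix k assume k: "k < n + r"
    show "ccomp D (\<lambda>p. f p ! k)"
    proof (cases "k < n")
      case True
      have "ccomp D (\<lambda>p. p ! rep k)" by (rule ccomp_nth) (use rep True MN lenD in force)
      then show ?thesis using True by (simp add: f_def nth_append)
    next
      case False
      have "ccomp D (\<lambda>p. p ! (M + (k - n)))" by (rule ccomp_nth) (use k False Nr lenD in force)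
      then have "ccomp D (\<lambda>p. gg (p ! (M + (k - n))))"
      proof (rule ccomp_isCont)
        fix p assume "p \<in> D"
        moreover have "k - n < r" using k False by simp
        ultimately have "0 < p ! (M + (k - n)) \<and> p ! (M + (k - n)) < 1" using free by blast
        then show "isCont gg (p ! (M + (k - n)))" by (intro isCont_gg) auto
      qed
      moreover have "k - n < r" using k False by simp
      ultimately show ?thesis using False by (simp add: f_def nth_append)
    qed
  qed
  have conth: "lcont_on B h"
  proof (rule lcont_compI[where b="N"])
    show "length (h p) = N" for p by (rule lenh)
    fix k assume k: "k < N"
    show "ccomp B (\<lambda>p. h p ! k)"
    proof (cases "k < M")
      case True
      have "ccomp B (\<lambda>p. p ! var k)" by (rule ccomp_nth) (use var True lenB in force)
      then show ?thesis using True by (simp add: h_def nth_append)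
    next
      case False
      have "ccomp B (\<lambda>p. p ! (n + (k - M)))" by (rule ccomp_nth) (use k False Nr lenB in force)
      then have "ccomp B (\<lambda>p. gi (p ! (n + (k - M))))"
        by (rule ccomp_isCont) (auto intro!: isCont_gi)
      moreover have "k - M < r" using k False Nr by simp
      ultimately show ?thesis using False by (simp add: h_def nth_append)
    qed
  qed
  have continv: "lcont_on B (inv_into D f)"
    using conth invh unfolding lcont_on_def by simp
  define L where "L = N + (n + r)"
  define G where "G = {z. length z = L \<and>
      (\<forall>k<M. z ! k - z ! (N + var k) = 0) \<and>
      (\<forall>j<m. peval (F j) (take n (drop N z)) = 0) \<and>
      (\<forall>j<r. z ! (M + j) > 0) \<and> (\<forall>j<r. 1 - z ! (M + j) > 0) \<and>
      (\<forall>j<r. z ! (N + n + j) * (z ! (M + j) * (1 - z ! (M + j))) - (2 * z ! (M + j) - 1) = 0)}"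
  have graph: "{p @ f p | p. p \<in> D} = G"
  proof (intro equalityI subsetI)
    fix z assume "z \<in> {p @ f p | p. p \<in> D}"
    then obtain p where z: "z = p @ f p" and pD: "p \<in> D" by blast
    obtain x where x: "x \<in> S" "\<forall>k<M. p ! k = x ! (var k)" "take n (f p) = x" using Dx[OF pD] by blast
    have lp: "length p = N" using lenD[OF pD] .
    have lx: "length x = n" using lenS[OF x(1)] .
    have c0: "length z = L" using lp lenf z by (simp add: L_def)
    have c1: "\<forall>k<M. z ! k - z ! (N + var k) = 0"
    proof (intro allI impI)
      fix k assume k: "k < M"
      have "f p ! var k = x ! var k" using x(3) var k by (metis nth_take)
      then show "z ! k - z ! (N + var k) = 0" using k MN x(2) lp by (simp add: z nth_append)
    qed
    have tz: "take n (drop N z) = x" using z lp x(3) by simp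
    have c2: "\<forall>j<m. peval (F j) (take n (drop N z)) = 0"
      unfolding tz using x(1) by (simp add: S_def zero_set_def)
    have c34: "\<forall>j<r. z ! (M + j) > 0 \<and> 1 - z ! (M + j) > 0"
      using free[OF pD] lp Nr by (simp add: z nth_append)
    have c5: "\<forall>j<r. z ! (N + n + j) * (z ! (M + j) * (1 - z ! (M + j))) - (2 * z ! (M + j) - 1) = 0"
    proof (intro allI impI)
      fix j assume j: "j < r"
      have zj: "z ! (M + j) = p ! (M + j)" using j lp Nr by (simp add: z nth_append)
      have zn: "z ! (N + n + j) = gg (p ! (M + j))" using j lp by (simp add: z nth_append f_def)
      show "z ! (N + n + j) * (z ! (M + j) * (1 - z ! (M + j))) - (2 * z ! (M + j) - 1) = 0"
        using gg_rel[of "p ! (M + j)" "gg (p ! (M + j))"] free[OF pD j] unfolding zj zn by simp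
    qed
    show "z \<in> G" unfolding G_def using c0 c1 c2 c34 c5 by blast
  next
    fix z assume "z \<in> G"
    then have c0: "length z = L" and c1: "\<forall>k<M. z ! k - z ! (N + var k) = 0"
      and c2: "\<forall>j<m. peval (F j) (take n (drop N z)) = 0"
      and c3: "\<forall>j<r. z ! (M + j) > 0" and c4: "\<forall>j<r. 1 - z ! (M + j) > 0"
      and c5: "\<forall>j<r. z ! (N + n + j) * (z ! (M + j) * (1 - z ! (M + j))) - (2 * z ! (M + j) - 1) = 0"
      unfolding G_def by blast+
    define p where "p = take N z"
    define x where "x = take n (drop N z)"
    have lp: "length p = N" using c0 by (simp add: p_def L_def)
    have lx: "length x = n" using c0 by (simp add: x_def L_def)
    have xS: "x \<in> S" using lx c2 by (simp add: S_def zero_set_def x_def)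
    have px: "\<forall>k<M. p ! k = x ! (var k)"
    proof (intro allI impI)
      fix k assume k: "k < M"
      then show "p ! k = x ! var k" using c1 var MN c0 by (simp add: p_def x_def L_def)
    qed
    have pfree: "0 < p ! k \<and> p ! k < 1" if "M \<le> k" "k < N" for k
    proof -
      have "k - M < r" using that Nr by simp
      then show ?thesis using c3 c4 that by (fastforce simp: p_def)
    qed
    have pD: "p \<in> D" unfolding D_def Dset_def using lp xS px pfree by blast
    have "drop N z = f p"
    proof (rule nth_equalityI)
      show "length (drop N z) = length (f p)" using c0 lenf by (simp add: L_def)
      fix i assume i: "i < length (drop N z)"
      show "drop N z ! i = f p ! i"
      proof (cases "i < n")
        case True
        have "p ! rep i = x ! i" using px rep True by metis
        then show ?thesis using True i c0 by (simp add: f_def nth_append x_def L_def)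
      next
        case False
        define j where "j = i - n"
        have j: "j < r" using i False c0 by (simp add: j_def L_def)
        have ij: "i = n + j" using False by (simp add: j_def)
        have pj: "p ! (M + j) = z ! (M + j)" using j Nr by (simp add: p_def)
        have "z ! (N + n + j) = gg (p ! (M + j))"
          using gg_rel[of "p ! (M + j)" "z ! (N + n + j)"] pfree[of "M + j"] c5 j Nr pj by simp
        then show ?thesis using j c0 by (simp add: ij f_def nth_append L_def add.assoc)
      qed
    qed
    then have "z = p @ f p" unfolding p_def by (metis append_take_drop_id)
    then show "z \<in> {p @ f p | p. p \<in> D}" using pD by blast
  qed
  have NL: "N + n + r = L" by (simp add: L_def)
  have s1: "{z. length z = L \<and> (\<forall>k<M. z ! k - z ! (N + var k) = 0)} \<in> semialg L"
  proof (rule semialg_all, intro allI impI)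
    fix k assume k: "k < M"
    have "pfun L (\<lambda>z. z ! k - z ! (N + var k))"
      by (intro pfun_diff pfun_var) (use k var MN NL in auto)
    then show "{z. length z = L \<and> z ! k - z ! (N + var k) = 0} \<in> semialg L" by (rule semialg_eq)
  qed
  have s2: "{z. length z = L \<and> (\<forall>j<m. peval (F j) (take n (drop N z)) = 0)} \<in> semialg L"
  proof (rule semialg_all, intro allI impI)
    fix j assume j: "j < m"
    have "pfun L (\<lambda>z. peval (F j) (take n (drop N z)))"
      by (rule pfun_peval_shift) (use j polys NL in auto)
    then show "{z. length z = L \<and> peval (F j) (take n (drop N z)) = 0} \<in> semialg L" by (rule semialg_eq)
  qed
  have s3: "{z. length z = L \<and> (\<forall>j<r. z ! (M + j) > 0)} \<in> semialg L"
  proof (rule semialg_all, intro allI impI)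
    fix j assume j: "j < r"
    have "pfun L (\<lambda>z. z ! (M + j))"
      by (intro pfun_var) (use j Nr NL in auto)
    then show "{z. length z = L \<and> z ! (M + j) > 0} \<in> semialg L" by (rule semialg_gt)
  qed
  have s4: "{z. length z = L \<and> (\<forall>j<r. 1 - z ! (M + j) > 0)} \<in> semialg L"
  proof (rule semialg_all, intro allI impI)
    fix j assume j: "j < r"
    have "pfun L (\<lambda>z. 1 - z ! (M + j))"
      by (intro pfun_diff pfun_const pfun_var) (use j Nr NL in auto)
    then show "{z. length z = L \<and> 1 - z ! (M + j) > 0} \<in> semialg L" by (rule semialg_gt)
  qed
  have s5: "{z. length z = L \<and> (\<forall>j<r. z ! (N + n + j) * (z ! (M + j) * (1 - z ! (M + j))) - (2 * z ! (M + j) - 1) = 0)} \<in> semialg L"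
  proof (rule semialg_all, intro allI impI)
    fix j assume j: "j < r"
    have "pfun L (\<lambda>z. z ! (N + n + j) * (z ! (M + j) * (1 - z ! (M + j))) - (2 * z ! (M + j) - 1))"
      by (intro pfun_diff pfun_mult pfun_const pfun_var) (use j Nr NL in auto)
    then show "{z. length z = L \<and> z ! (N + n + j) * (z ! (M + j) * (1 - z ! (M + j))) - (2 * z ! (M + j) - 1) = 0} \<in> semialg L"
      by (rule semialg_eq)
  qed
  have Gs: "G \<in> semialg L"
    unfolding G_def by (intro semialg_conj s1 s2 s3 s4 s5)
  have iso: "semialg_iso N D (n + r) B"
    unfolding semialg_iso_def
    using lenD lenB bij contf continv graph Gs by (auto simp: L_def)
  have "stably_iso (n + r, B) (n, S)"
    unfolding B_def using si_proj[OF zero_set_semialg[OF polys], of r] by (simp add: S_def)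
  then show ?thesis using si_trans[OF si_iso[OF iso]] by (simp add: D_def S_def)
qed


definition W :: "nat \<Rightarrow> real \<Rightarrow> real" where "W v t = (if v = 1 then t else 1 - t)"

definition EV :: "nat \<Rightarrow> nat \<Rightarrow> ((nat \<Rightarrow> nat) \<Rightarrow> real) \<Rightarrow> real list \<Rightarrow> real" where
  "EV N i \<phi> p = (\<Sum>s\<in>{s\<in>pure_profiles N. s i = 1}. \<phi> s * (\<Prod>k\<in>{..<N} - {i}. W (s k) (p ! k)))"

definition ind :: "nat \<Rightarrow> real" where "ind v = (if v = 1 then 1 else 0)"

definition MK :: "nat set \<Rightarrow> (nat \<Rightarrow> nat) \<Rightarrow> real" where "MK K s = (\<Prod>q\<in>K. ind (s q))"

lemma exp_payoff_W: "exp_payoff N u i j p =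
   (\<Sum>s\<in>{s\<in>pure_profiles N. s i = j}. u i s * (\<Prod>k\<in>{..<N} - {i}. W (s k) (p ! k)))"
  by (simp add: exp_payoff_def W_def)

lemma exp_payoff_0:
  assumes "\<And>s. s i \<noteq> 1 \<Longrightarrow> u i s = 0"
  shows "exp_payoff N u i 0 p = 0"
  unfolding exp_payoff_W by (rule sum.neutral) (use assms in auto)

lemma exp_payoff_1:
  assumes "\<And>s. s i = 1 \<Longrightarrow> u i s = \<phi> s"
  shows "exp_payoff N u i 1 p = EV N i \<phi> p"
  unfolding exp_payoff_W EV_def by (rule sum.cong) (use assms in auto)

lemma profiles_eq:
  assumes "i < N"
  shows "{s\<in>pure_profiles N. s i = 1} = PiE {..<N} (\<lambda>k. if k = i then {1} else {0, 1})"
proof (intro equalityI subsetI)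
  fix s assume "s \<in> {s\<in>pure_profiles N. s i = 1}"
  then have s: "\<forall>k\<in>{..<N}. s k \<in> {0, 1}" "s \<in> extensional {..<N}" "s i = 1"
    unfolding pure_profiles_def PiE_iff by blast+
  have "\<forall>k\<in>{..<N}. s k \<in> (if k = i then {1} else {0, 1})"
  proof
    fix k assume "k \<in> {..<N}" then show "s k \<in> (if k = i then {1} else {0, 1})" using s by (cases "k = i") auto
  qed
  then show "s \<in> PiE {..<N} (\<lambda>k. if k = i then {1} else {0, 1})" unfolding PiE_iff using s(2) by blast
next
  fix s :: "nat \<Rightarrow> nat" assume "s \<in> PiE {..<N} (\<lambda>k. if k = i then {1} else {0, 1})"
  then have s: "\<forall>k\<in>{..<N}. s k \<in> (if k = i then {1} else {0, 1})" "s \<in> extensional {..<N}"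
    unfolding PiE_iff by blast+
  have "\<forall>k\<in>{..<N}. s k \<in> {0, 1}"
  proof
    fix k assume "k \<in> {..<N}"
    then have "s k \<in> (if k = i then {1} else {0, 1})" using s(1) by blast
    then show "s k \<in> {0, 1}" by (auto split: if_splits)
  qed
  moreover have "s i = 1"
  proof -
    have "s i \<in> (if i = i then {1} else {0, 1})" using s(1) assms by blast
    then show ?thesis by simp
  qed
  ultimately show "s \<in> {s\<in>pure_profiles N. s i = 1}" unfolding pure_profiles_def PiE_iff using s(2) by blast
qed

lemma EV_MK:
  assumes i: "i < N" and K: "K \<subseteq> {..<N} - {i}"
  shows "EV N i (MK K) p = (\<Prod>q\<in>K. p ! q)"
proof -
  define H where "H k v = (if k = i then 1 else (if k \<in> K then ind v else 1) * W v (p ! k))" for k v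
  have fK: "finite K" using K finite_subset by blast
  have summand: "MK K s * (\<Prod>k\<in>{..<N} - {i}. W (s k) (p ! k)) = (\<Prod>k<N. H k (s k))" for s
  proof -
    have "(\<Prod>k<N. H k (s k)) = H i (s i) * (\<Prod>k\<in>{..<N} - {i}. H k (s k))"
      using i by (subst prod.remove[of _ i]) auto
    also have "\<dots> = (\<Prod>k\<in>{..<N} - {i}. (if k \<in> K then ind (s k) else 1) * W (s k) (p ! k))"
      by (simp add: H_def)
    also have "\<dots> = (\<Prod>k\<in>{..<N} - {i}. (if k \<in> K then ind (s k) else 1)) * (\<Prod>k\<in>{..<N} - {i}. W (s k) (p ! k))"
      by (rule prod.distrib)
    also have "(\<Prod>k\<in>{..<N} - {i}. (if k \<in> K then ind (s k) else 1)) = MK K s"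
      unfolding MK_def using K by (subst prod.If_cases) (auto simp: Int_absorb1 intro!: arg_cong2[where f=prod])
    finally show ?thesis by simp
  qed
  have "EV N i (MK K) p = (\<Sum>s\<in>PiE {..<N} (\<lambda>k. if k = i then {1} else {0, 1}). \<Prod>k<N. H k (s k))"
    unfolding EV_def profiles_eq[OF i] summand ..
  also have "\<dots> = (\<Prod>k<N. \<Sum>v\<in>(if k = i then {1} else {0, 1}). H k v)"
    by (rule prod_sum_PiE[symmetric]) auto
  also have "\<dots> = (\<Prod>k<N. if k \<in> K then p ! k else 1)"
    using K by (intro prod.cong) (auto simp: H_def ind_def W_def)
  also have "\<dots> = (\<Prod>q\<in>K. p ! q)"
    using K by (subst prod.If_cases) (auto simp: Int_absorb2 intro!: arg_cong2[where f=prod])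
  finally show ?thesis .
qed

lemma EV_lin: "EV N i (\<lambda>s. \<Sum>a\<in>A. c a * \<phi> a s) p = (\<Sum>a\<in>A. c a * EV N i (\<phi> a) p)"
  unfolding EV_def by (simp add: sum_distrib_left sum_distrib_right sum.swap[of _ A] mult.assoc)

lemma EV_diff: "EV N i (\<lambda>s. \<phi> s - \<psi> s) p = EV N i \<phi> p - EV N i \<psi> p"
  unfolding EV_def by (simp add: left_diff_distrib sum_subtractf)

lemma EV_zero: "EV N i (\<lambda>s. 0) p = 0"
  unfolding EV_def by simp

definition gameu :: "(nat \<Rightarrow> (nat \<Rightarrow> nat) \<Rightarrow> real) \<Rightarrow> nat \<Rightarrow> (nat \<Rightarrow> nat) \<Rightarrow> real" where
  "gameu \<phi> i s = (if s i = 1 then \<phi> i s else 0)"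

lemma tmne_gameu:
  "tmne N (gameu \<phi>) = {p. length p = N \<and> (\<forall>i<N. 0 < p ! i \<and> p ! i < 1) \<and> (\<forall>i<N. EV N i (\<phi> i) p = 0)}"
proof -
  have "exp_payoff N (gameu \<phi>) i 1 p = EV N i (\<phi> i) p" for i p by (rule exp_payoff_1) (simp add: gameu_def)
  moreover have "exp_payoff N (gameu \<phi>) i 0 p = 0" for i p by (rule exp_payoff_0) (simp add: gameu_def)
  ultimately show ?thesis unfolding tmne_def by simp
qed


lemma deg_bound:
  fixes F :: "nat \<Rightarrow> mpoly"
  assumes polys: "\<forall>j<m. is_poly n (F j)" and j: "j < m" and a: "F j a \<noteq> 0"
  shows "a i \<le> Max (insert 0 {deg_in (F j) i | j. j < m})"
proof -
  have fin: "finite {a. F j a \<noteq> 0}" using polys j by (simp add: is_poly_def)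
  have "{a i | a. F j a \<noteq> 0} = (\<lambda>a. a i) ` {a. F j a \<noteq> 0}" by auto
  then have "finite {a i | a. F j a \<noteq> 0}" using fin by simp
  then have "a i \<le> deg_in (F j) i" unfolding deg_in_def using a by (intro Max_ge) auto
  also have "deg_in (F j) i \<le> Max (insert 0 {deg_in (F j) i | j. j < m})"
  proof -
    have "{deg_in (F j) i | j. j < m} = (\<lambda>j. deg_in (F j) i) ` {..<m}" by auto
    then have "finite {deg_in (F j) i | j. j < m}" by simp
    then show ?thesis using j by (intro Max_ge) auto
  qed
  finally show ?thesis .
qed

lemma deg_pos:
  fixes F :: "nat \<Rightarrow> mpoly"
  assumes polys: "\<forall>j<m. is_poly n (F j)"
    and inside: "\<forall>x\<in>zero_set n m F. (\<forall>i<n. 0 < x ! i) \<and> sum_list x < 1"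
    and ne: "zero_set n m F \<noteq> {}" and i: "i < n"
  shows "Max (insert 0 {deg_in (F j) i | j. j < m}) \<ge> 1"
proof (rule ccontr)
  assume "\<not> ?thesis"
  then have M0: "Max (insert 0 {deg_in (F j) i | j. j < m}) = 0" by simp
  have d0: "a i = 0" if j: "j < m" and a: "F j a \<noteq> 0" for j a
    using deg_bound[OF polys j a, of i] M0 by simp
  obtain x where x: "x \<in> zero_set n m F" using ne by blast
  define x' where "x' = x[i := -1]"
  have lx: "length x = n" using x by (simp add: zero_set_def)
  have lx': "length x' = n" using lx by (simp add: x'_def)
  have "peval (F j) x' = peval (F j) x" if j: "j < m" for j
  proof -
    have "(\<Prod>k<length x'. (x' ! k) ^ (a k)) = (\<Prod>k<length x. (x ! k) ^ (a k))" if a: "F j a \<noteq> 0" for a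
    proof -
      have ai: "a i = 0" using d0[OF j a] .
      have "(\<Prod>k<length x'. (x' ! k) ^ (a k)) = (\<Prod>k<length x. (x' ! k) ^ (a k))" using lx lx' by simp
      also have "\<dots> = (\<Prod>k<length x. (x ! k) ^ (a k))"
      proof (rule prod.cong[OF refl])
        fix k assume "k \<in> {..<length x}"
        show "(x' ! k) ^ (a k) = (x ! k) ^ (a k)"
        proof (cases "k = i")
          case True then show ?thesis using ai by simp
        next
          case False then show ?thesis by (simp add: x'_def)
        qed
      qed
      finally show ?thesis .
    qed
    then show ?thesis unfolding peval_def by (intro sum.cong refl) simp
  qed
  then have "x' \<in> zero_set n m F" using x lx' by (simp add: zero_set_def)
  then have "\<forall>i<n. 0 < x' ! i" using inside by blast
  then have "0 < x' ! i" using i by blast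
  moreover have "x' ! i = -1" using i lx by (simp add: x'_def)
  ultimately show False by simp
qed

lemma zero_set_ne_m:
  fixes F :: "nat \<Rightarrow> mpoly"
  assumes inside: "\<forall>x\<in>zero_set n m F. (\<forall>i<n. 0 < x ! i) \<and> sum_list x < 1"
    and "n > 0 \<or> zero_set n m F = {}"
  shows "m > 0"
proof (rule ccontr)
  assume "\<not> m > 0"
  then have m: "m = 0" by simp
  have z: "replicate n 0 \<in> zero_set n m F" by (simp add: zero_set_def m)
  show False
  proof (cases "n > 0")
    case True
    then show ?thesis using inside z by fastforce
  next
    case False
    then show ?thesis using assms(2) z by blast
  qed
qed

lemma off_mono: "i \<le> i' \<Longrightarrow> sum (d::nat\<Rightarrow>nat) {..<i} \<le> sum d {..<(i'::nat)}"
  by (rule sum_mono2) auto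

lemma off_exists: "k < sum (d::nat\<Rightarrow>nat) {..<n} \<Longrightarrow> \<exists>i<n. sum d {..<i} \<le> k \<and> k < sum d {..<Suc i}"
proof (induction n)
  case 0 then show ?case by simp
next
  case (Suc n)
  show ?case
  proof (cases "k < sum d {..<n}")
    case True then show ?thesis using Suc.IH by (meson less_SucI)
  next
    case False then show ?thesis using Suc.prems by (intro exI[of _ n]) auto
  qed
qed

lemma off_unique:
  fixes d :: "nat \<Rightarrow> nat"
  assumes "sum d {..<i} \<le> k" "k < sum d {..<Suc i}" "sum d {..<i'} \<le> k" "k < sum d {..<Suc i'}"
  shows "i = (i'::nat)"
proof (rule ccontr)
  assume "i \<noteq> i'"
  then consider "Suc i \<le> i'" | "Suc i' \<le> i" by linarith
  then show False
  proof cases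
    case 1 then show ?thesis using off_mono[OF 1, of d] assms by linarith
  next
    case 2 then show ?thesis using off_mono[OF 2, of d] assms by linarith
  qed
qed

definition bvar :: "(nat \<Rightarrow> nat) \<Rightarrow> nat \<Rightarrow> nat \<Rightarrow> nat" where
  "bvar d n k = (THE i. i < n \<and> sum d {..<i} \<le> k \<and> k < sum d {..<Suc i})"

lemma bvar_eq:
  fixes d :: "nat \<Rightarrow> nat"
  assumes "i < n" "sum d {..<i} \<le> k" "k < sum d {..<Suc i}"
  shows "bvar d n k = i"
  unfolding bvar_def by (rule the_equality) (use assms off_unique in blast)+

lemma bvar_prop:
  fixes d :: "nat \<Rightarrow> nat"
  assumes "k < sum d {..<n}"
  shows "bvar d n k < n \<and> sum d {..<bvar d n k} \<le> k \<and> k < sum d {..<Suc (bvar d n k)}"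
proof -
  obtain i where i: "i < n" "sum d {..<i} \<le> k" "k < sum d {..<Suc i}" using off_exists[OF assms] by blast
  then show ?thesis using bvar_eq[OF i] by simp
qed


definition Ka :: "(nat \<Rightarrow> nat) \<Rightarrow> nat \<Rightarrow> (nat \<Rightarrow> nat) \<Rightarrow> nat set" where
  "Ka d n a = (\<lambda>(i, t). sum d {..<i} + t) ` (SIGMA i:{..<n}. {..<a i})"

definition Fcond :: "mpoly \<Rightarrow> (nat \<Rightarrow> nat) \<Rightarrow> nat \<Rightarrow> (nat \<Rightarrow> nat) \<Rightarrow> real" where
  "Fcond c d n s = (\<Sum>a\<in>{a. c a \<noteq> 0}. c a * MK (Ka d n a) s)"

lemma in_block:
  fixes d :: "nat \<Rightarrow> nat"
  assumes "i < n" "t < d i"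
  shows "sum d {..<i} + t < sum d {..<n}" "bvar d n (sum d {..<i} + t) = i"
proof -
  have "sum d {..<Suc i} \<le> sum d {..<n}" using assms by (intro off_mono) simp
  then show "sum d {..<i} + t < sum d {..<n}" using assms by simp
  show "bvar d n (sum d {..<i} + t) = i" using assms by (intro bvar_eq) auto
qed

lemma Ka_sub:
  assumes "\<forall>i<n. a i \<le> d i"
  shows "Ka d n a \<subseteq> {..<sum d {..<n}}"
  unfolding Ka_def using in_block(1) assms by fastforce

lemma prod_Ka:
  fixes d :: "nat \<Rightarrow> nat"
  assumes ad: "\<forall>i<n. a i \<le> d i"
    and px: "\<forall>i<n. \<forall>t<d i. p ! (sum d {..<i} + t) = x ! i" and lx: "length x = n"
  shows "(\<Prod>q\<in>Ka d n a. p ! q) = mon a x"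
proof -
  have inj: "inj_on (\<lambda>(i, t). sum d {..<i} + t) (SIGMA i:{..<n}. {..<a i})"
  proof (rule inj_onI, clarify)
    fix i t i' t' assume a: "i < n" "t < a i" "i' < n" "t' < a i'" "sum d {..<i} + t = sum d {..<i'} + t'"
    have "bvar d n (sum d {..<i} + t) = i" using a ad by (intro in_block(2)) auto
    moreover have "bvar d n (sum d {..<i'} + t') = i'" using a ad by (intro in_block(2)) auto
    ultimately have "i = i'" using a(5) by simp
    then show "i = i' \<and> t = t'" using a(5) by simp
  qed
  have "(\<Prod>q\<in>Ka d n a. p ! q) = (\<Prod>(i, t)\<in>(SIGMA i:{..<n}. {..<a i}). p ! (sum d {..<i} + t))"
    unfolding Ka_def by (subst prod.reindex[OF inj]) (simp add: case_prod_beta comp_def)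
  also have "\<dots> = (\<Prod>i<n. \<Prod>t<a i. p ! (sum d {..<i} + t))"
    by (rule prod.Sigma[symmetric]) auto
  also have "\<dots> = (\<Prod>i<n. \<Prod>t<a i. x ! i)"
    using px ad by (intro prod.cong refl) (meson dual_order.strict_trans1 lessThan_iff)
  also have "\<dots> = mon a x" by (simp add: mon_def lx)
  finally show ?thesis .
qed

lemma EV_Fcond:
  fixes d :: "nat \<Rightarrow> nat"
  assumes c: "finite {a. c a \<noteq> 0}" and ad: "\<And>a. c a \<noteq> 0 \<Longrightarrow> \<forall>i<n. a i \<le> d i"
    and q: "sum d {..<n} \<le> q" "q < N"
    and px: "\<forall>i<n. \<forall>t<d i. p ! (sum d {..<i} + t) = x ! i" and lx: "length x = n"
  shows "EV N q (Fcond c d n) p = peval c x"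
proof -
  have "EV N q (Fcond c d n) p = (\<Sum>a\<in>{a. c a \<noteq> 0}. c a * EV N q (MK (Ka d n a)) p)"
    unfolding Fcond_def by (rule EV_lin)
  also have "\<dots> = (\<Sum>a\<in>{a. c a \<noteq> 0}. c a * mon a x)"
  proof (rule sum.cong[OF refl])
    fix a assume "a \<in> {a. c a \<noteq> 0}"
    then have a: "\<forall>i<n. a i \<le> d i" using ad by blast
    have "Ka d n a \<subseteq> {..<N} - {q}" using Ka_sub[OF a] q by auto
    then have "EV N q (MK (Ka d n a)) p = (\<Prod>q\<in>Ka d n a. p ! q)" using q by (intro EV_MK) auto
    also have "\<dots> = mon a x" by (rule prod_Ka[OF a px lx])
    finally show "c a * EV N q (MK (Ka d n a)) p = c a * mon a x" by simp
  qed
  also have "\<dots> = peval c x" by (simp add: peval_mon)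
  finally show ?thesis .
qed

lemma inside_lt1:
  fixes x :: "real list"
  assumes "\<forall>i<length x. 0 < x ! i" "sum_list x < 1" "i < length x"
  shows "x ! i < 1"
proof -
  have "x ! i \<le> (\<Sum>k = 0..<length x. x ! k)"
    by (rule member_le_sum) (use assms in \<open>auto intro: less_imp_le\<close>)
  then show ?thesis using assms(2) by (simp add: sum_list_sum_nth)
qed


definition phiG :: "(nat \<Rightarrow> nat) \<Rightarrow> nat \<Rightarrow> (nat \<Rightarrow> mpoly) \<Rightarrow> nat \<Rightarrow> (nat \<Rightarrow> nat) \<Rightarrow> real" where
  "phiG d n F q s = (let D = sum d {..<n}; k = (q + D - 2) mod D in
     if q < D then (if k + 1 < D \<and> bvar d n k = bvar d n (k + 1) then MK {k} s - MK {k + 1} s else 0)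
     else Fcond (F (q - D)) d n s)"

lemma mod_facts1:
  fixes D q :: nat
  assumes "D \<ge> 3" "q < D" "(q + D - 2) mod D + 1 < D"
  shows "q \<noteq> (q + D - 2) mod D \<and> q \<noteq> (q + D - 2) mod D + 1"
proof -
  consider "q = 0" | "q = 1" | "q \<ge> 2" by linarith
  then show ?thesis
  proof cases
    case 1
    have "q + D - 2 = D - 2" using 1 by simp
    moreover have "D - 2 < D" using assms by simp
    ultimately have "(q + D - 2) mod D = D - 2" by (metis mod_less)
    then show ?thesis using assms 1 by linarith
  next
    case 2
    have "q + D - 2 = D - 1" using 2 assms by simp
    moreover have "D - 1 < D" using assms by simp
    ultimately have "(q + D - 2) mod D = D - 1" by (metis mod_less)
    then show ?thesis using assms by linarith
  next
    case 3
    then have "q + D - 2 = (q - 2) + D" by simp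
    then have "(q + D - 2) mod D = (q - 2) mod D" by (metis mod_add_self2)
    also have "\<dots> = q - 2" using assms by (intro mod_less) linarith
    finally show ?thesis using 3 by linarith
  qed
qed

lemma mod_facts2:
  fixes D k :: nat
  assumes "D \<ge> 3" "k + 1 < D"
  shows "(if k + 2 < D then k + 2 else 0) < D \<and> ((if k + 2 < D then k + 2 else 0) + D - 2) mod D = k"
proof (cases "k + 2 < D")
  case True
  have "k + 2 + D - 2 = k + D" by simp
  then have "(k + 2 + D - 2) mod D = k mod D" by (metis mod_add_self2)
  also have "\<dots> = k" using assms by (intro mod_less) linarith
  finally show ?thesis using True by simp
next
  case False
  then have k: "k = D - 2" using assms by linarith
  have "D - 2 < D" using assms by linarith
  then have "(0 + D - 2) mod D = D - 2" by simp
  then show ?thesis using False k assms by simp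
qed

lemma D_ge3:
  fixes d :: "nat \<Rightarrow> nat"
  assumes dpos: "\<forall>i<n. d i \<ge> 1" and ns: "\<not> (n = 1 \<and> sum d {..<n} = 2)"
    and k: "k + 1 < sum d {..<n}" and b: "bvar d n k = bvar d n (k + 1)"
  shows "sum d {..<n} \<ge> 3"
proof -
  define i where "i = bvar d n k"
  have pk: "i < n" "sum d {..<i} \<le> k" using bvar_prop[of k d n] k by (auto simp: i_def)
  have pk1: "k + 1 < sum d {..<Suc i}" using bvar_prop[of "k+1" d n] k b by (auto simp: i_def)
  have di: "d i \<ge> 2" using pk pk1 by simp
  have "sum d {..<n} \<ge> (\<Sum>i'<n. if i' = i then 2 else 1)"
    by (rule sum_mono) (use dpos di in auto)
  also have "(\<Sum>i'<n. (if i' = i then 2 else 1::nat)) = (\<Sum>i'<n. 1 + (if i' = i then 1 else 0))"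
    by (rule sum.cong) auto
  also have "\<dots> = n + (\<Sum>i'<n. (if i' = i then 1 else 0::nat))" by (simp only: sum.distrib) simp
  also have "(\<Sum>i'<n. (if i' = i then 1 else 0::nat)) = 1" using pk(1) by (simp add: sum.delta)
  finally have ge: "sum d {..<n} \<ge> n + 1" .
  show ?thesis
  proof (cases "n \<ge> 2")
    case True then show ?thesis using ge by simp
  next
    case False
    then have "n = 1" using pk(1) by simp
    then show ?thesis using ns ge by simp
  qed
qed

lemma generic_tmne:
  fixes F :: "nat \<Rightarrow> mpoly" and d :: "nat \<Rightarrow> nat"
  assumes polys: "\<forall>j<m. is_poly n (F j)"
    and ad: "\<forall>j<m. \<forall>a. F j a \<noteq> 0 \<longrightarrow> (\<forall>i<n. a i \<le> d i)"
    and dpos: "\<forall>i<n. d i \<ge> 1"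
    and inside: "\<forall>x\<in>zero_set n m F. (\<forall>i<n. 0 < x ! i) \<and> sum_list x < 1"
    and ns: "\<not> (n = 1 \<and> sum d {..<n} = 2)"
    and N: "N = sum d {..<n} + m"
  shows "tmne N (gameu (phiG d n F)) = Dset N (sum d {..<n}) (bvar d n) (zero_set n m F)"
proof -
  define D where "D = sum d {..<n}"
  define S where "S = zero_set n m F"
  have fin: "finite {a. F j a \<noteq> 0}" if "j < m" for j using polys that by (simp add: is_poly_def)
  have EVeq: "EV N q (phiG d n F q) p = p ! ((q + D - 2) mod D) - p ! ((q + D - 2) mod D + 1)"
    if "q < D" "(q + D - 2) mod D + 1 < D" "bvar d n ((q + D - 2) mod D) = bvar d n ((q + D - 2) mod D + 1)" for q p
  proof -
    define k where "k = (q + D - 2) mod D"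
    have D3: "D \<ge> 3" using D_ge3[OF dpos ns] that by (simp add: D_def)
    have qk: "q \<noteq> k \<and> q \<noteq> k + 1" using mod_facts1[OF D3 that(1)] that(2) by (simp add: k_def)
    have "phiG d n F q = (\<lambda>s. MK {k} s - MK {k + 1} s)"
      using that by (intro ext) (simp add: phiG_def D_def[symmetric] k_def[symmetric] Let_def)
    then have "EV N q (phiG d n F q) p = EV N q (MK {k}) p - EV N q (MK {k + 1}) p" by (simp add: EV_diff)
    also have "\<dots> = p ! k - p ! (k + 1)"
      using qk that N by (subst (1 2) EV_MK) (auto simp: D_def k_def)
    finally show ?thesis by (simp add: k_def)
  qed
  have EVzero: "EV N q (phiG d n F q) p = 0"
    if "q < D" "\<not> ((q + D - 2) mod D + 1 < D \<and> bvar d n ((q + D - 2) mod D) = bvar d n ((q + D - 2) mod D + 1))" for q p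
  proof -
    have "phiG d n F q = (\<lambda>s. 0)" using that by (intro ext) (auto simp: phiG_def D_def[symmetric] Let_def)
    then show ?thesis by (simp add: EV_zero)
  qed
  have EVF: "EV N q (phiG d n F q) p = peval (F (q - D)) x"
    if "D \<le> q" "q < N" "\<forall>i<n. \<forall>t<d i. p ! (sum d {..<i} + t) = x ! i" "length x = n" for q p x
  proof -
    have j: "q - D < m" using that N D_def by simp
    have "phiG d n F q = Fcond (F (q - D)) d n" using that by (intro ext) (auto simp: phiG_def D_def[symmetric] Let_def)
    moreover have ad': "\<And>a. F (q - D) a \<noteq> 0 \<Longrightarrow> \<forall>i<n. a i \<le> d i" using ad j by blast
    moreover have "sum d {..<n} \<le> q" using that(1) D_def by simp
    ultimately show ?thesis using EV_Fcond[OF fin[OF j] ad' _ that(2) that(3) that(4)] by simp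
  qed
  show ?thesis
  proof (intro equalityI subsetI)
    fix p assume "p \<in> tmne N (gameu (phiG d n F))"
    then have lp: "length p = N" and pr: "\<forall>i<N. 0 < p ! i \<and> p ! i < 1"
      and ev: "\<forall>q<N. EV N q (phiG d n F q) p = 0" unfolding tmne_gameu by blast+
    have adj: "p ! k = p ! (k + 1)" if "k + 1 < D" "bvar d n k = bvar d n (k + 1)" for k
    proof -
      have D3: "D \<ge> 3" using D_ge3[OF dpos ns] that by (simp add: D_def)
      define q where "q = (if k + 2 < D then k + 2 else 0)"
      have q: "q < D" "(q + D - 2) mod D = k" using mod_facts2[OF D3 that(1)] by (simp_all add: q_def)
      have "EV N q (phiG d n F q) p = p ! k - p ! (k + 1)" using EVeq[OF q(1)] q(2) that by simp
      moreover have "EV N q (phiG d n F q) p = 0" using ev q(1) N D_def by simp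
      ultimately show ?thesis by simp
    qed
    have blk: "p ! (sum d {..<i} + t) = p ! (sum d {..<i})" if "i < n" "t < d i" for i t
      using that(2)
    proof (induction t)
      case 0 then show ?case by simp
    next
      case (Suc t)
      have "sum d {..<i} + t + 1 < D" "bvar d n (sum d {..<i} + t) = bvar d n (sum d {..<i} + t + 1)"
        using in_block[OF that(1), of "Suc t"] in_block[OF that(1), of t] Suc.prems by (simp_all add: D_def)
      then have "p ! (sum d {..<i} + t) = p ! (sum d {..<i} + t + 1)" by (rule adj)
      then show ?case using Suc by simp
    qed
    define x where "x = map (\<lambda>i. p ! (sum d {..<i})) [0..<n]"
    have lx: "length x = n" by (simp add: x_def)
    have px: "\<forall>i<n. \<forall>t<d i. p ! (sum d {..<i} + t) = x ! i" using blk by (simp add: x_def)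
    have xS: "x \<in> S"
    proof -
      have "peval (F j) x = 0" if "j < m" for j
      proof -
        have "peval (F j) x = EV N (D + j) (phiG d n F (D + j)) p"
          using EVF[of "D + j" p x] px lx that N D_def by simp
        then show ?thesis using ev that N D_def by simp
      qed
      then show ?thesis using lx by (simp add: S_def zero_set_def)
    qed
    have pk: "p ! k = x ! (bvar d n k)" if "k < D" for k
    proof -
      define i where "i = bvar d n k"
      have i: "i < n" "sum d {..<i} \<le> k" "k < sum d {..<Suc i}" using bvar_prop[of k d n] that by (auto simp: i_def D_def)
      then have "k = sum d {..<i} + (k - sum d {..<i})" "k - sum d {..<i} < d i" by auto
      then show ?thesis using px i(1) by (metis i_def)
    qed
    show "p \<in> Dset N (sum d {..<n}) (bvar d n) (zero_set n m F)"
      unfolding Dset_def using lp xS pk pr by (auto simp: S_def D_def)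
  next
    fix p assume "p \<in> Dset N (sum d {..<n}) (bvar d n) (zero_set n m F)"
    then obtain x where lp: "length p = N" and xS: "x \<in> S" and pk: "\<forall>k<D. p ! k = x ! (bvar d n k)"
      and fr: "\<forall>k. D \<le> k \<and> k < N \<longrightarrow> 0 < p ! k \<and> p ! k < 1"
      unfolding Dset_def S_def D_def by blast
    have lx: "length x = n" using xS by (simp add: S_def zero_set_def)
    have xr: "0 < x ! i \<and> x ! i < 1" if "i < n" for i
      using inside xS that lx inside_lt1[of x i] unfolding S_def by auto
    have px: "\<forall>i<n. \<forall>t<d i. p ! (sum d {..<i} + t) = x ! i"
      using pk in_block by (simp add: D_def)
    have pr: "\<forall>i<N. 0 < p ! i \<and> p ! i < 1"
    proof (intro allI impI)
      fix k assume k: "k < N"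
      show "0 < p ! k \<and> p ! k < 1"
      proof (cases "k < D")
        case True
        then have "bvar d n k < n" using bvar_prop[of k d n] by (simp add: D_def)
        then show ?thesis using xr pk True by simp
      next
        case False then show ?thesis using fr k by simp
      qed
    qed
    have ev: "\<forall>q<N. EV N q (phiG d n F q) p = 0"
    proof (intro allI impI)
      fix q assume q: "q < N"
      show "EV N q (phiG d n F q) p = 0"
      proof (cases "q < D")
        case True
        show ?thesis
        proof (cases "(q + D - 2) mod D + 1 < D \<and> bvar d n ((q + D - 2) mod D) = bvar d n ((q + D - 2) mod D + 1)")
          case True
          then show ?thesis using EVeq[OF \<open>q < D\<close>] pk by simp
        next
          case False
          then show ?thesis using EVzero[OF \<open>q < D\<close>] by simp
        qed
      next
        case False
        then have "EV N q (phiG d n F q) p = peval (F (q - D)) x" using EVF q px lx by simp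
        moreover have "q - D < m" using q False N D_def by simp
        ultimately show ?thesis using xS by (simp add: S_def zero_set_def)
      qed
    qed
    show "p \<in> tmne N (gameu (phiG d n F))" unfolding tmne_gameu using lp pr ev by blast
  qed
qed


definition phiS :: "(nat \<Rightarrow> nat) \<Rightarrow> nat \<Rightarrow> (nat \<Rightarrow> mpoly) \<Rightarrow> nat \<Rightarrow> (nat \<Rightarrow> nat) \<Rightarrow> real" where
  "phiS d n F q s = (if q = 0 then MK {2} s - MK {1} s else if q = 1 then MK {2} s - MK {0} s
     else Fcond (F (q - 2)) d n s)"

lemma special_tmne:
  fixes F :: "nat \<Rightarrow> mpoly" and d :: "nat \<Rightarrow> nat"
  assumes polys: "\<forall>j<m. is_poly n (F j)"
    and ad: "\<forall>j<m. \<forall>a. F j a \<noteq> 0 \<longrightarrow> (\<forall>i<n. a i \<le> d i)"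
    and inside: "\<forall>x\<in>zero_set n m F. (\<forall>i<n. 0 < x ! i) \<and> sum_list x < 1"
    and sp: "n = 1" "sum d {..<n} = 2" and m: "m > 0"
    and N: "N = sum d {..<n} + m"
  shows "tmne N (gameu (phiS d n F)) = Dset N 3 (\<lambda>_. 0) (zero_set n m F)"
proof -
  define S where "S = zero_set n m F"
  have d0: "d 0 = 2" using sp by simp
  have N3: "N \<ge> 3" using N sp m by simp
  have fin: "finite {a. F j a \<noteq> 0}" if "j < m" for j using polys that by (simp add: is_poly_def)
  have EV0: "EV N 0 (phiS d n F 0) p = p ! 2 - p ! 1" for p
  proof -
    have "phiS d n F 0 = (\<lambda>s. MK {2} s - MK {1} s)" by (intro ext) (simp add: phiS_def)
    then show ?thesis using N3 by (simp add: EV_diff EV_MK)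
  qed
  have EV1: "EV N 1 (phiS d n F 1) p = p ! 2 - p ! 0" for p
  proof -
    have "phiS d n F 1 = (\<lambda>s. MK {2} s - MK {0} s)" by (intro ext) (simp add: phiS_def)
    then show ?thesis using N3 by (simp add: EV_diff EV_MK)
  qed
  have EVF: "EV N q (phiS d n F q) p = peval (F (q - 2)) x"
    if "2 \<le> q" "q < N" "\<forall>i<n. \<forall>t<d i. p ! (sum d {..<i} + t) = x ! i" "length x = n" for q p x
  proof -
    have j: "q - 2 < m" using that N sp by simp
    have "phiS d n F q = Fcond (F (q - 2)) d n" using that by (intro ext) (auto simp: phiS_def)
    moreover have ad': "\<And>a. F (q - 2) a \<noteq> 0 \<Longrightarrow> \<forall>i<n. a i \<le> d i" using ad j by blast
    moreover have "sum d {..<n} \<le> q" using that(1) sp by simp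
    ultimately show ?thesis using EV_Fcond[OF fin[OF j] ad' _ that(2) that(3) that(4)] by simp
  qed
  have pxI: "\<forall>i<n. \<forall>t<d i. p ! (sum d {..<i} + t) = [p ! 0] ! i" if "p ! 1 = p ! 0" for p
  proof (intro allI impI)
    fix i t assume "i < n" "t < d i"
    then have "i = 0" "t < 2" using sp d0 by auto
    then show "p ! (sum d {..<i} + t) = [p ! 0] ! i" using that by (cases t) auto
  qed
  show ?thesis
  proof (intro equalityI subsetI)
    fix p assume "p \<in> tmne N (gameu (phiS d n F))"
    then have lp: "length p = N" and pr: "\<forall>i<N. 0 < p ! i \<and> p ! i < 1"
      and ev: "\<forall>q<N. EV N q (phiS d n F q) p = 0" unfolding tmne_gameu by blast+
    have e1: "p ! 2 = p ! 1" using ev EV0[of p] N3 by auto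
    have e2: "p ! 2 = p ! 0" using ev EV1[of p] N3 by auto
    define x where "x = [p ! 0]"
    have lx: "length x = n" using sp by (simp add: x_def)
    have px: "\<forall>i<n. \<forall>t<d i. p ! (sum d {..<i} + t) = x ! i" unfolding x_def by (rule pxI) (use e1 e2 in simp)
    have xS: "x \<in> S"
    proof -
      have "peval (F j) x = 0" if "j < m" for j
      proof -
        have "peval (F j) x = EV N (2 + j) (phiS d n F (2 + j)) p"
          using EVF[of "2 + j" p x] px lx that N sp by simp
        then show ?thesis using ev that N sp by simp
      qed
      then show ?thesis using lx by (simp add: S_def zero_set_def)
    qed
    have pk: "\<forall>k<3. p ! k = x ! 0" using e1 e2 by (auto simp: x_def less_Suc_eq numeral_3_eq_3 numeral_2_eq_2)
    show "p \<in> Dset N 3 (\<lambda>_. 0) (zero_set n m F)"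
      unfolding Dset_def using lp xS pk pr by (auto simp: S_def)
  next
    fix p assume "p \<in> Dset N 3 (\<lambda>_. 0) (zero_set n m F)"
    then obtain x where lp: "length p = N" and xS: "x \<in> S" and pk: "\<forall>k<3. p ! k = x ! 0"
      and fr: "\<forall>k. 3 \<le> k \<and> k < N \<longrightarrow> 0 < p ! k \<and> p ! k < 1"
      unfolding Dset_def S_def by blast
    have lx: "length x = n" using xS by (simp add: S_def zero_set_def)
    have xr: "0 < x ! 0 \<and> x ! 0 < 1"
      using inside xS lx inside_lt1[of x 0] sp unfolding S_def by auto
    have p012: "p ! 0 = x ! 0" "p ! 1 = x ! 0" "p ! 2 = x ! 0" using pk by auto
    have x1: "x = [p ! 0]" using lx sp p012 by (cases x) auto
    have px: "\<forall>i<n. \<forall>t<d i. p ! (sum d {..<i} + t) = x ! i" unfolding x1 by (rule pxI) (use p012 in simp)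
    have pr: "\<forall>i<N. 0 < p ! i \<and> p ! i < 1"
    proof (intro allI impI)
      fix k assume k: "k < N"
      show "0 < p ! k \<and> p ! k < 1"
      proof (cases "k < 3")
        case True then show ?thesis using xr pk by simp
      next
        case False then show ?thesis using fr k by simp
      qed
    qed
    have ev: "\<forall>q<N. EV N q (phiS d n F q) p = 0"
    proof (intro allI impI)
      fix q assume q: "q < N"
      consider "q = 0" | "q = 1" | "q \<ge> 2" by linarith
      then show "EV N q (phiS d n F q) p = 0"
      proof cases
        case 1 then show ?thesis using EV0 p012 by simp
      next
        case 2 then show ?thesis using EV1 p012 by simp
      next
        case 3
        then have "EV N q (phiS d n F q) p = peval (F (q - 2)) x" using EVF q px lx by simp
        moreover have "q - 2 < m" using q 3 N sp by simp
        ultimately show ?thesis using xS by (simp add: S_def zero_set_def)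
      qed
    qed
    show "p \<in> tmne N (gameu (phiS d n F))" unfolding tmne_gameu using lp pr ev by blast
  qed
qed

definition phiE :: "nat \<Rightarrow> (nat \<Rightarrow> nat) \<Rightarrow> real" where
  "phiE q s = (if q = 0 then MK {} s else 0)"

lemma empty_tmne: assumes "N > 0" shows "tmne N (gameu phiE) = {}"
proof -
  have "EV N 0 (phiE 0) p = 1" for p
  proof -
    have "phiE 0 = MK {}" by (intro ext) (simp add: phiE_def)
    moreover have "EV N 0 (MK {}) p = (\<Prod>q\<in>{}. p ! q)" using assms by (intro EV_MK) auto
    ultimately show ?thesis by simp
  qed
  moreover have "p \<notin> tmne N (gameu phiE)" if "EV N 0 (phiE 0) p = 1" for p
  proof
    assume "p \<in> tmne N (gameu phiE)"
    then have "\<forall>i<N. EV N i (phiE i) p = 0" unfolding tmne_gameu by blast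
    then have "EV N 0 (phiE 0) p = 0" using assms by blast
    then show False using that by simp
  qed
  ultimately show ?thesis by blast
qed

theorem theorem6:
  fixes n m :: nat and F :: "nat \<Rightarrow> mpoly"
  assumes polys: "\<forall>j<m. is_poly n (F j)"
    and inside: "\<forall>x\<in>zero_set n m F. (\<forall>i<n. 0 < x ! i) \<and> sum_list x < 1"
  shows "\<exists>u :: nat \<Rightarrow> (nat \<Rightarrow> nat) \<Rightarrow> real.
           stably_iso
             ((\<Sum>i<n. Max (insert 0 {deg_in (F j) i | j. j < m})) + m,
              tmne ((\<Sum>i<n. Max (insert 0 {deg_in (F j) i | j. j < m})) + m) u)
             (n, zero_set n m F)"
proof -
  define d where "d i = Max (insert 0 {deg_in (F j) i | j. j < m})" for i
  define N where "N = sum d {..<n} + m"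
  have Neq: "(\<Sum>i<n. Max (insert 0 {deg_in (F j) i | j. j < m})) + m = N"
    by (simp add: N_def d_def)
  have ad: "\<forall>j<m. \<forall>a. F j a \<noteq> 0 \<longrightarrow> (\<forall>i<n. a i \<le> d i)"
    using deg_bound[OF polys] by (simp add: d_def)
  show ?thesis unfolding Neq
  proof (cases "zero_set n m F = {}")
    case True
    have m: "m > 0" using zero_set_ne_m[OF inside] True by blast
    have "tmne N (gameu phiE) = {}" using m by (intro empty_tmne) (simp add: N_def)
    moreover have "semialg_iso N {} n {}"
      unfolding semialg_iso_def
      by (auto simp: bij_betw_def lcont_on_def semialg_empty intro!: exI[of _ id])
    ultimately show "\<exists>u. stably_iso (N, tmne N u) (n, zero_set n m F)"
      using True si_iso by metis
  next
    case False
    have dpos: "\<forall>i<n. d i \<ge> 1" using deg_pos[OF polys inside False] by (simp add: d_def)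
    show "\<exists>u. stably_iso (N, tmne N u) (n, zero_set n m F)"
    proof (cases "n = 1 \<and> sum d {..<n} = 2")
      case True
      have m: "m > 0" using zero_set_ne_m[OF inside] True by simp
      have t: "tmne N (gameu (phiS d n F)) = Dset N 3 (\<lambda>_. 0) (zero_set n m F)"
        by (rule special_tmne[OF polys ad inside]) (use True m N_def in blast)+
      have "stably_iso (N, Dset N 3 (\<lambda>_. 0) (zero_set n m F)) (n, zero_set n m F)"
      proof (rule part1[OF polys, where rep="\<lambda>_. 0"])
        show "3 \<le> N" using True m N_def by linarith
      qed (use True in auto)
      then show ?thesis using t by metis
    next
      case False
      have t: "tmne N (gameu (phiG d n F)) = Dset N (sum d {..<n}) (bvar d n) (zero_set n m F)"
        using False by (intro generic_tmne[OF polys ad dpos inside]) (simp_all add: N_def)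
      have "stably_iso (N, Dset N (sum d {..<n}) (bvar d n) (zero_set n m F)) (n, zero_set n m F)"
      proof (rule part1[OF polys, where rep="\<lambda>i. sum d {..<i}"])
        show "sum d {..<n} \<le> N" by (simp add: N_def)
        show "\<forall>k<sum d {..<n}. bvar d n k < n" using bvar_prop by blast
        show "\<forall>i<n. sum d {..<i} < sum d {..<n} \<and> bvar d n (sum d {..<i}) = i"
          using in_block[where d=d and n=n and t=0] dpos by auto
      qed
      then show ?thesis using t by metis
    qed
  qed
qed

end
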